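(* The 1s frequency of $\mathcal{W}^1_n$ and the 1s frequency of $\mathcal{B}_n(11)$ both tend to $\frac{2-\varphi}{3-\varphi}$ as $n\to\infty$, where $\varphi=\frac{1+\sqrt5}{2}$.
   Context: A binary word is $1$-decreasing if for every maximal run of $0$s, of length $a>0$, together with the (possibly empty) maximal run of $1$s immediately following it, of length $b$, one has $a>b$; $\mathcal{W}^1_n$ is the set of $1$-decreasing words of length $n$. $\mathcal{B}_n(11)$ is the set of binary words of length $n$ with no two consecutive $1$s. The 1s frequency of a finite set of binary words is the total number of occurrences of $1$ in all words of the set divided by the total number of letters in all words of the set. *)

theory Defs
  imports Complex_Main
begin

text \<open>Binary words are lists of booleans; True is the letter 1, False the letter 0.\<close>

definition zero_one_block :: "bool list \<Rightarrow> nat \<Rightarrow> nat \<Rightarrow> nat \<Rightarrow> bool" where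
  "zero_one_block w i a b \<longleftrightarrow>
     0 < a \<and> i + a + b \<le> length w \<and>
     (i = 0 \<or> w ! (i - 1)) \<and>
     (\<forall>j. i \<le> j \<and> j < i + a \<longrightarrow> \<not> w ! j) \<and>
     (\<forall>j. i + a \<le> j \<and> j < i + a + b \<longrightarrow> w ! j) \<and>
     (i + a + b = length w \<or> \<not> w ! (i + a + b))"

definition one_decreasing :: "bool list \<Rightarrow> bool" where
  "one_decreasing w \<longleftrightarrow> (\<forall>i a b. zero_one_block w i a b \<longrightarrow> a > b)"

definition W1 :: "nat \<Rightarrow> bool list set" where
  "W1 n = {w. length w = n \<and> one_decreasing w}"

definition B11 :: "nat \<Rightarrow> bool list set" where
  "B11 n = {w. length w = n \<and> (\<forall>i. i + 1 < length w \<longrightarrow> \<not> (w ! i \<and> w ! (i + 1)))}"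

definition ones_count :: "bool list \<Rightarrow> nat" where
  "ones_count w = length (filter id w)"

definition ones_frequency :: "bool list set \<Rightarrow> real" where
  "ones_frequency S = real (\<Sum>w\<in>S. ones_count w) / real (\<Sum>w\<in>S. length w)"

definition golden_ratio :: real where
  "golden_ratio = (1 + sqrt 5) / 2"

end

theory Submission
  imports Defs "HOL-Number_Theory.Fib"
begin

lemma zob_left:
  assumes "zero_one_block u i a b" "u \<noteq> []" "last u" "v = [] \<or> \<not> hd v"
  shows "zero_one_block (u @ v) i a b"
proof -
  have lu: "u ! (length u - 1)" using assms(2,3) by (simp add: last_conv_nth)
  have hv: "v \<noteq> [] \<Longrightarrow> \<not> v ! 0" using assms(4) by (simp add: hd_conv_nth)
  from assms(1) have A: "0 < a" "i + a + b \<le> length u" "i = 0 \<or> u ! (i - 1)"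
    "\<forall>j. i \<le> j \<and> j < i + a \<longrightarrow> \<not> u ! j" "\<forall>j. i + a \<le> j \<and> j < i + a + b \<longrightarrow> u ! j"
    "i + a + b = length u \<or> \<not> u ! (i + a + b)"
    unfolding zero_one_block_def by auto
  show ?thesis unfolding zero_one_block_def
  proof (intro conjI allI impI)
    show "0 < a" by fact
    show "i + a + b \<le> length (u @ v)" using A by simp
    show "i = 0 \<or> (u @ v) ! (i - 1)" using A by (auto simp: nth_append)
    fix j show "i \<le> j \<and> j < i + a \<Longrightarrow> \<not> (u @ v) ! j" using A by (auto simp: nth_append)
  next
    fix j show "i + a \<le> j \<and> j < i + a + b \<Longrightarrow> (u @ v) ! j" using A by (auto simp: nth_append)
  next
    show "i + a + b = length (u @ v) \<or> \<not> (u @ v) ! (i + a + b)"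
      using A hv by (cases "v = []") (auto simp: nth_append)
  qed
qed

lemma zob_right:
  assumes "zero_one_block v i a b" "u \<noteq> []" "last u"
  shows "zero_one_block (u @ v) (length u + i) a b"
proof -
  have lu: "u ! (length u - 1)" using assms(2,3) by (simp add: last_conv_nth)
  from assms(1) have A: "0 < a" "i + a + b \<le> length v" "i = 0 \<or> v ! (i - 1)"
    "\<forall>j. i \<le> j \<and> j < i + a \<longrightarrow> \<not> v ! j" "\<forall>j. i + a \<le> j \<and> j < i + a + b \<longrightarrow> v ! j"
    "i + a + b = length v \<or> \<not> v ! (i + a + b)"
    unfolding zero_one_block_def by auto
  show ?thesis unfolding zero_one_block_def
  proof (intro conjI allI impI)
    show "0 < a" by fact
    show "length u + i + a + b \<le> length (u @ v)" using A by simp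
    show "length u + i = 0 \<or> (u @ v) ! (length u + i - 1)"
      using A lu by (cases "i = 0") (auto simp: nth_append)
    fix j assume "length u + i \<le> j \<and> j < length u + i + a"
    then have "i \<le> j - length u \<and> j - length u < i + a" "j \<ge> length u" by auto
    then show "\<not> (u @ v) ! j" using A(4) by (auto simp: nth_append)
  next
    fix j assume "length u + i + a \<le> j \<and> j < length u + i + a + b"
    then have "i + a \<le> j - length u \<and> j - length u < i + a + b" "j \<ge> length u" by auto
    then show "(u @ v) ! j" using A(5) by (auto simp: nth_append)
  next
    show "length u + i + a + b = length (u @ v) \<or> \<not> (u @ v) ! (length u + i + a + b)"
      using A by (auto simp: nth_append add.assoc)
  qed
qed

lemma zob_split_left:
  assumes "zero_one_block (u @ v) i a b" "i < length u" "u \<noteq> []" "last u" "v = [] \<or> \<not> hd v"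
  shows "zero_one_block u i a b"
proof -
  have lu: "u ! (length u - 1)" using assms(3,4) by (simp add: last_conv_nth)
  have hv: "v \<noteq> [] \<Longrightarrow> \<not> v ! 0" using assms(5) by (simp add: hd_conv_nth)
  let ?w = "u @ v"
  from assms(1) have A: "0 < a" "i + a + b \<le> length ?w" "i = 0 \<or> ?w ! (i - 1)"
    "\<forall>j. i \<le> j \<and> j < i + a \<longrightarrow> \<not> ?w ! j" "\<forall>j. i + a \<le> j \<and> j < i + a + b \<longrightarrow> ?w ! j"
    "i + a + b = length ?w \<or> \<not> ?w ! (i + a + b)"
    unfolding zero_one_block_def by auto
  have le: "i + a + b \<le> length u"
  proof (rule ccontr)
    assume nle: "\<not> ?thesis"
    show False
    proof (cases "length u - 1 < i + a")
      case True
      then have "\<not> ?w ! (length u - 1)" using A(4) assms(2) by auto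
      then show False using lu assms(3) by (auto simp: nth_append)
    next
      case False
      then have "?w ! (length u)" using A(5) nle assms(3) by auto
      moreover have "v \<noteq> []" using nle A(2) by auto
      ultimately show False using hv by (auto simp: nth_append)
    qed
  qed
  show ?thesis unfolding zero_one_block_def
  proof (intro conjI allI impI)
    show "0 < a" by fact
    show "i + a + b \<le> length u" by fact
    show "i = 0 \<or> u ! (i - 1)" using A(3) assms(2) by (auto simp: nth_append)
    fix j assume "i \<le> j \<and> j < i + a"
    then show "\<not> u ! j" using A(4) le by (auto simp: nth_append)
  next
    fix j assume "i + a \<le> j \<and> j < i + a + b"
    then show "u ! j" using A(5) le by (auto simp: nth_append split: if_splits)
  next
    show "i + a + b = length u \<or> \<not> u ! (i + a + b)"
      using A(6) le by (auto simp: nth_append split: if_splits)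
  qed
qed

lemma zob_split_right:
  assumes "zero_one_block (u @ v) i a b" "length u \<le> i"
  shows "zero_one_block v (i - length u) a b"
proof -
  let ?w = "u @ v"
  from assms(1) have A: "0 < a" "i + a + b \<le> length ?w" "i = 0 \<or> ?w ! (i - 1)"
    "\<forall>j. i \<le> j \<and> j < i + a \<longrightarrow> \<not> ?w ! j" "\<forall>j. i + a \<le> j \<and> j < i + a + b \<longrightarrow> ?w ! j"
    "i + a + b = length ?w \<or> \<not> ?w ! (i + a + b)"
    unfolding zero_one_block_def by auto
  show ?thesis unfolding zero_one_block_def
  proof (intro conjI allI impI)
    show "0 < a" by fact
    show "i - length u + a + b \<le> length v" using A assms(2) by simp
    show "i - length u = 0 \<or> v ! (i - length u - 1)"
    proof (cases "i = length u")
      case False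
      then have "i - 1 \<ge> length u" "i - 1 - length u = i - length u - 1" "i \<noteq> 0" using assms(2) by auto
      then show ?thesis using A(3) by (auto simp: nth_append)
    qed simp
    fix j assume "i - length u \<le> j \<and> j < i - length u + a"
    then have "i \<le> j + length u \<and> j + length u < i + a" using assms(2) by auto
    then show "\<not> v ! j" using A(4) by (auto simp: nth_append)
  next
    fix j assume "i - length u + a \<le> j \<and> j < i - length u + a + b"
    then have "i + a \<le> j + length u \<and> j + length u < i + a + b" using assms(2) by auto
    then show "v ! j" using A(5) by (auto simp: nth_append)
  next
    show "i - length u + a + b = length v \<or> \<not> v ! (i - length u + a + b)"
      using A(6) assms(2) by (auto simp: nth_append)
  qed
qed

lemma od_split:
  assumes "u \<noteq> []" "last u" "v = [] \<or> \<not> hd v"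
  shows "one_decreasing (u @ v) \<longleftrightarrow> one_decreasing u \<and> one_decreasing v"
proof
  assume H: "one_decreasing (u @ v)"
  show "one_decreasing u \<and> one_decreasing v" unfolding one_decreasing_def
    using H zob_left[OF _ assms] zob_right[OF _ assms(1,2)] unfolding one_decreasing_def by blast
next
  assume H: "one_decreasing u \<and> one_decreasing v"
  show "one_decreasing (u @ v)" unfolding one_decreasing_def
  proof (intro allI impI)
    fix i a b assume Z: "zero_one_block (u @ v) i a b"
    show "b < a"
    proof (cases "i < length u")
      case True then show ?thesis using H zob_split_left[OF Z True assms] unfolding one_decreasing_def by blast
    next
      case False then show ?thesis using H zob_split_right[OF Z] unfolding one_decreasing_def by auto
    qed
  qed
qed

definition blk :: "nat \<Rightarrow> nat \<Rightarrow> bool list" where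
  "blk a b = replicate a False @ replicate b True"

lemma blk_nth: "j < a + b \<Longrightarrow> blk a b ! j = (a \<le> j)"
  by (auto simp: blk_def nth_append)

lemma length_blk[simp]: "length (blk a b) = a + b" by (simp add: blk_def)

lemma od_blk: "one_decreasing (blk a b) \<longleftrightarrow> (a = 0 \<or> b < a)"
proof
  assume H: "one_decreasing (blk a b)"
  show "a = 0 \<or> b < a"
  proof (rule ccontr)
    assume N: "\<not> ?thesis"
    then have "zero_one_block (blk a b) 0 a b"
      unfolding zero_one_block_def by (auto simp: blk_nth)
    then show False using H N unfolding one_decreasing_def by auto
  qed
next
  assume H: "a = 0 \<or> b < a"
  show "one_decreasing (blk a b)" unfolding one_decreasing_def
  proof (intro allI impI)
    fix i a' b' assume Z: "zero_one_block (blk a b) i a' b'"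
    then have A: "0 < a'" "i + a' + b' \<le> a + b" "i = 0 \<or> blk a b ! (i - 1)"
      "\<forall>j. i \<le> j \<and> j < i + a' \<longrightarrow> \<not> blk a b ! j" "\<forall>j. i + a' \<le> j \<and> j < i + a' + b' \<longrightarrow> blk a b ! j"
      unfolding zero_one_block_def by auto
    have "\<not> blk a b ! i" using A by auto
    then have ia: "i < a" using A by (auto simp: blk_nth)
    show "b' < a'"
    proof (cases "b' = 0")
      case True then show ?thesis using A by auto
    next
      case False
      have "blk a b ! (i + a')" using A False by auto
      then have "a \<le> i + a'" using A False by (auto simp: blk_nth)
      have "\<not> blk a b ! (i + a' - 1)" using A by auto
      moreover have j: "i + a' - 1 < a + b" using A False by auto
      ultimately have "i + a' - 1 < a" using blk_nth[OF j] by simp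
      have "i = 0"
      proof (rule ccontr)
        assume "i \<noteq> 0"
        then have "blk a b ! (i - 1)" using A by auto
        then show False using ia by (auto simp: blk_nth)
      qed
      then show ?thesis using A \<open>a \<le> i + a'\<close> \<open>i + a' - 1 < a\<close> H ia by auto
    qed
  qed
qed

lemma od_Nil: "one_decreasing []"
  unfolding one_decreasing_def zero_one_block_def by auto

lemma od_repF: "one_decreasing (replicate n False)"
  using od_blk[of n 0] by (cases n) (auto simp: blk_def)

lemma od_repT: "one_decreasing (replicate n True)"
  using od_blk[of 0 n] by (auto simp: blk_def)

lemma last_blk: "b > 0 \<Longrightarrow> last (blk a b)"
  by (simp add: blk_def)

lemma decompT: "\<exists>k v. w = replicate k True @ v \<and> (v = [] \<or> \<not> hd v)"
proof (induction w)
  case Nil then show ?case by auto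
next
  case (Cons x w)
  then obtain k v where "w = replicate k True @ v" "v = [] \<or> \<not> hd v" by auto
  then show ?case
    by (cases x) (rule exI[of _ "Suc k"], auto intro: exI[of _ 0])
qed

lemma decomp_blk: "\<exists>a b r. w = blk a b @ r \<and> (r = [] \<or> \<not> hd r) \<and> (b = 0 \<longrightarrow> r = [])"
proof (induction w)
  case Nil then show ?case by (auto simp: blk_def)
next
  case (Cons x w)
  then obtain a b r where D: "w = blk a b @ r" "r = [] \<or> \<not> hd r" "b = 0 \<longrightarrow> r = []" by auto
  show ?case
  proof (cases x)
    case False
    then show ?thesis using D by (intro exI[of _ "Suc a"] exI[of _ b] exI[of _ r]) (auto simp: blk_def)
  next
    case True
    show ?thesis
    proof (cases a)
      case 0
      then show ?thesis using D True by (intro exI[of _ 0] exI[of _ "Suc b"] exI[of _ r]) (auto simp: blk_def)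
    next
      case (Suc a')
      then show ?thesis using D True by (intro exI[of _ 0] exI[of _ 1] exI[of _ w]) (auto simp: blk_def)
    qed
  qed
qed

lemma od_repT_app: "v = [] \<or> \<not> hd v \<Longrightarrow> one_decreasing (replicate k True @ v) \<longleftrightarrow> one_decreasing v"
proof (cases k)
  case 0 then show ?thesis by simp
next
  case (Suc k')
  assume "v = [] \<or> \<not> hd v"
  then show ?thesis using od_split[of "replicate k True" v] od_repT[of k] Suc by simp
qed

lemma od_ConsT: "one_decreasing (True # w) \<longleftrightarrow> one_decreasing w"
proof -
  obtain k v where D: "w = replicate k True @ v" "v = [] \<or> \<not> hd v" using decompT by blast
  have "True # w = replicate (Suc k) True @ v" using D by simp
  then show ?thesis using od_repT_app[OF D(2)] D(1) by metis
qed

definition Z :: "nat \<Rightarrow> bool list set" where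
  "Z m = {w. length w = m \<and> one_decreasing w \<and> (w = [] \<or> \<not> hd w)}"

definition X :: "nat \<Rightarrow> bool list set" where
  "X m = (\<lambda>(b,r). blk (Suc b) b @ r) ` (SIGMA b:{1..m div 2}. Z (m - 2*b))"

lemma finite_Z: "finite (Z m)"
  by (rule finite_subset[OF _ finite_lists_length_eq[of "UNIV :: bool set" m]]) (auto simp: Z_def)

lemma finite_W1: "finite (W1 m)"
  by (rule finite_subset[OF _ finite_lists_length_eq[of "UNIV :: bool set" m]]) (auto simp: W1_def)

lemma W1_0: "W1 0 = {[]}" by (auto simp: W1_def od_Nil)
lemma Z_0: "Z 0 = {[]}" by (auto simp: Z_def od_Nil)

lemma W1_Suc: "W1 (Suc n) = Cons True ` W1 n \<union> Z (Suc n)"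
proof (intro equalityI subsetI)
  fix w assume "w \<in> W1 (Suc n)"
  then obtain x w' where w: "w = x # w'" "length w' = n" "one_decreasing w" unfolding W1_def
    by (cases w) auto
  then show "w \<in> Cons True ` W1 n \<union> Z (Suc n)"
    by (cases x) (auto simp: W1_def Z_def od_ConsT)
next
  fix w assume "w \<in> Cons True ` W1 n \<union> Z (Suc n)"
  then show "w \<in> W1 (Suc n)" by (auto simp: W1_def Z_def od_ConsT)
qed

lemma W1_Suc_disj: "Cons True ` W1 n \<inter> Z (Suc n) = {}"
  by (auto simp: Z_def)

lemma tw_rep: "takeWhile Not (replicate n False @ True # ys) = replicate n False"
  by (induction n) auto

lemma blk_app_eq:
  assumes "blk (Suc b) b @ r = blk (Suc b') b' @ r'" "b \<ge> 1" "b' \<ge> 1"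
  shows "b = b' \<and> r = r'"
proof -
  have tw: "takeWhile Not (blk (Suc c) c @ s) = replicate (Suc c) False" if "c \<ge> 1" for c s
  proof -
    have "blk (Suc c) c @ s = replicate (Suc c) False @ (True # (replicate (c - 1) True @ s))"
      using that by (cases c) (auto simp: blk_def)
    then show ?thesis by (simp only: tw_rep)
  qed
  have "replicate (Suc b) False = replicate (Suc b') False"
    using tw[OF assms(2), of r] tw[OF assms(3), of r'] assms(1) by simp
  then have "b = b'" by simp
  then show ?thesis using assms(1) by simp
qed

lemma inj_X: "inj_on (\<lambda>(b,r). blk (Suc b) b @ r) (SIGMA b:{1..m div 2}. Z (m - 2*b))"
proof (rule inj_onI)
  fix x y assume xy: "x \<in> (SIGMA b:{1..m div 2}. Z (m - 2*b))" "y \<in> (SIGMA b:{1..m div 2}. Z (m - 2*b))"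
    "(\<lambda>(b,r). blk (Suc b) b @ r) x = (\<lambda>(b,r). blk (Suc b) b @ r) y"
  obtain b r b' r' where "x = (b, r)" "y = (b', r')" by fastforce
  then show "x = y" using xy blk_app_eq[of b r b' r'] by auto
qed

lemma hd_blk_app: "hd (blk (Suc a) b @ r) = False" by (simp add: blk_def)

lemma Z_Suc: "Z (Suc m) = Cons False ` Z m \<union> X m"
proof (intro equalityI subsetI)
  fix w assume wZ: "w \<in> Z (Suc m)"
  then have L: "length w = Suc m" and O: "one_decreasing w" and H: "\<not> hd w" unfolding Z_def by auto
  obtain a b r where D: "w = blk a b @ r" "r = [] \<or> \<not> hd r" "b = 0 \<longrightarrow> r = []"
    using decomp_blk by blast
  have a0: "a > 0"
  proof (rule ccontr)
    assume "\<not> a > 0"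
    then show False using D H L by (cases b) (auto simp: blk_def)
  qed
  show "w \<in> Cons False ` Z m \<union> X m"
  proof (cases "b = 0")
    case True
    then have "w = False # replicate m False" using D L by (simp add: blk_def)
    moreover have "replicate m False \<in> Z m" using od_repF[of m] by (cases m) (auto simp: Z_def)
    ultimately show ?thesis by blast
  next
    case False
    have sp: "one_decreasing w \<longleftrightarrow> one_decreasing (blk a b) \<and> one_decreasing r"
      using od_split[of "blk a b" r] D False a0 last_blk[of b a] by (auto simp: blk_def)
    then have ba: "b < a" and Or: "one_decreasing r" using O od_blk[of a b] a0 by auto
    show ?thesis
    proof (cases "a = Suc b")
      case True
      have "b \<in> {1..m div 2}" using L D True False by auto
      moreover have "r \<in> Z (m - 2*b)" using L D True Or by (auto simp: Z_def)
      ultimately have "(b, r) \<in> (SIGMA b:{1..m div 2}. Z (m - 2*b))" by auto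
      then show ?thesis unfolding X_def using D True by force
    next
      case ne: False
      have w': "w = False # (blk (a - 1) b @ r)" using D a0 by (cases a) (auto simp: blk_def)
      have "one_decreasing (blk (a - 1) b @ r)"
        using od_split[of "blk (a-1) b" r] D False last_blk[of b "a-1"] od_blk[of "a-1" b] ba ne Or
        by (auto simp: blk_def)
      moreover have "hd (blk (a - 1) b @ r) = False" using ba ne by (cases "a - 1") (auto simp: blk_def)
      ultimately have "blk (a - 1) b @ r \<in> Z m" using L w' by (auto simp: Z_def)
      then show ?thesis using w' by blast
    qed
  qed
next
  fix w assume "w \<in> Cons False ` Z m \<union> X m"
  then show "w \<in> Z (Suc m)"
  proof
    assume "w \<in> Cons False ` Z m"
    then obtain v where v: "w = False # v" "v \<in> Z m" by auto
    have "one_decreasing (False # v)"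
    proof (cases "v = []")
      case True then show ?thesis using od_repF[of 1] by simp
    next
      case False
      then have hv: "\<not> hd v" and Ov: "one_decreasing v" using v by (auto simp: Z_def)
      obtain a b r where D: "v = blk a b @ r" "r = [] \<or> \<not> hd r" "b = 0 \<longrightarrow> r = []"
        using decomp_blk by blast
      show ?thesis
      proof (cases "b = 0")
        case True
        then show ?thesis using D od_repF[of "Suc a"] by (simp add: blk_def)
      next
        case b0: False
        have a0: "a > 0" using D hv b0 by (cases a) (auto simp: blk_def)
        have "one_decreasing (blk a b) \<and> one_decreasing r"
          using od_split[of "blk a b" r] D b0 last_blk[of b a] Ov by (auto simp: blk_def)
        then have "b < a" "one_decreasing r" using od_blk[of a b] a0 by auto
        moreover have "False # v = blk (Suc a) b @ r" using D by (simp add: blk_def)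
        ultimately show ?thesis
          using od_split[of "blk (Suc a) b" r] D b0 last_blk[of b "Suc a"] od_blk[of "Suc a" b]
          by (auto simp: blk_def)
      qed
    qed
    then show ?thesis using v by (auto simp: Z_def)
  next
    assume "w \<in> X m"
    then obtain b r where br: "b \<in> {1..m div 2}" "r \<in> Z (m - 2*b)" "w = blk (Suc b) b @ r"
      unfolding X_def by auto
    have "one_decreasing w"
      using od_split[of "blk (Suc b) b" r] br last_blk[of b "Suc b"] od_blk[of "Suc b" b]
      by (auto simp: Z_def blk_def)
    moreover have "length w = Suc m" using br by (auto simp: Z_def)
    ultimately show ?thesis using br by (auto simp: Z_def hd_blk_app)
  qed
qed

lemma Z_Suc_disj: "Cons False ` Z m \<inter> X m = {}"
proof (rule ccontr)
  assume "\<not> ?thesis"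
  then obtain w where w: "w \<in> Cons False ` Z m" "w \<in> X m" by blast
  from w(1) obtain v where v0: "v \<in> Z m" "w = False # v" by blast
  from w(2) obtain b r where br: "b \<in> {1..m div 2}" "r \<in> Z (m - 2*b)" "w = blk (Suc b) b @ r"
    unfolding X_def by auto
  have v: "v \<in> Z m" "b \<in> {1..m div 2}" "r \<in> Z (m - 2*b)"
    "False # v = blk (Suc b) b @ r" using v0 br by auto
  then have "v = blk b b @ r" by (simp add: blk_def)
  moreover have "blk b b \<noteq> []" "last (blk b b)" using v(2) by (auto simp: blk_def)
  ultimately have "one_decreasing v \<longleftrightarrow> one_decreasing (blk b b) \<and> one_decreasing r"
    using od_split v(3) by (auto simp: Z_def)
  then show False using v od_blk[of b b] by (auto simp: Z_def)
qed

lemma ones_Cons: "ones_count (x # w) = (if x then Suc (ones_count w) else ones_count w)"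
  by (simp add: ones_count_def)

lemma ones_blk: "ones_count (blk a b @ r) = b + ones_count r"
  by (simp add: ones_count_def blk_def)

definition zc where "zc m = card (Z m)"
definition zo where "zo m = sum ones_count (Z m)"
definition cW where "cW n = card (W1 n)"
definition sW where "sW n = sum ones_count (W1 n)"

lemma cW_Suc: "cW (Suc n) = cW n + zc (Suc n)"
proof -
  have "card (W1 (Suc n)) = card (Cons True ` W1 n) + card (Z (Suc n))"
    unfolding W1_Suc by (rule card_Un_disjoint) (use W1_Suc_disj finite_W1 finite_Z in auto)
  then show ?thesis unfolding cW_def zc_def by (simp add: card_image)
qed

lemma sW_Suc: "sW (Suc n) = sW n + cW n + zo (Suc n)"
proof -
  have "sum ones_count (W1 (Suc n)) = sum ones_count (Cons True ` W1 n) + sum ones_count (Z (Suc n))"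
    unfolding W1_Suc by (rule sum.union_disjoint) (use W1_Suc_disj finite_W1 finite_Z in auto)
  also have "sum ones_count (Cons True ` W1 n) = (\<Sum>w\<in>W1 n. Suc (ones_count w))"
    by (subst sum.reindex) (auto simp: ones_Cons)
  also have "\<dots> = (\<Sum>w\<in>W1 n. ones_count w + 1)" by simp
  also have "\<dots> = sW n + cW n" by (simp only: sum.distrib sW_def cW_def card_eq_sum)
  finally show ?thesis unfolding sW_def zo_def by simp
qed

lemma card_X: "card (X m) = (\<Sum>b\<in>{1..m div 2}. zc (m - 2*b))"
  unfolding X_def zc_def
  by (subst card_image[OF inj_X]) (simp add: card_SigmaI finite_Z)

lemma sum_X: "sum ones_count (X m) = (\<Sum>b\<in>{1..m div 2}. b * zc (m - 2*b) + zo (m - 2*b))"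
proof -
  have "sum ones_count (X m) = (\<Sum>(b,r)\<in>(SIGMA b:{1..m div 2}. Z (m - 2*b)). b + ones_count r)"
    unfolding X_def by (subst sum.reindex[OF inj_X]) (simp add: case_prod_unfold ones_blk)
  also have "\<dots> = (\<Sum>b\<in>{1..m div 2}. \<Sum>r\<in>Z (m - 2*b). b + ones_count r)"
    by (subst sum.Sigma) (auto simp: finite_Z)
  also have "\<dots> = (\<Sum>b\<in>{1..m div 2}. b * zc (m - 2*b) + zo (m - 2*b))"
    by (simp add: sum.distrib zc_def zo_def mult.commute)
  finally show ?thesis .
qed

lemma zc_Suc: "zc (Suc m) = zc m + (\<Sum>b\<in>{1..m div 2}. zc (m - 2*b))"
proof -
  have "card (Z (Suc m)) = card (Cons False ` Z m) + card (X m)"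
    unfolding Z_Suc by (rule card_Un_disjoint) (use Z_Suc_disj finite_Z in \<open>auto simp: X_def\<close>)
  then show ?thesis by (simp add: card_image card_X zc_def)
qed

lemma zo_Suc: "zo (Suc m) = zo m + (\<Sum>b\<in>{1..m div 2}. b * zc (m - 2*b) + zo (m - 2*b))"
proof -
  have "sum ones_count (Z (Suc m)) = sum ones_count (Cons False ` Z m) + sum ones_count (X m)"
    unfolding Z_Suc by (rule sum.union_disjoint) (use Z_Suc_disj finite_Z in \<open>auto simp: X_def\<close>)
  also have "sum ones_count (Cons False ` Z m) = zo m"
    by (subst sum.reindex) (auto simp: ones_Cons zo_def)
  finally show ?thesis by (simp add: sum_X zo_def)
qed

lemma sum_shift2:
  "(\<Sum>b\<in>{1..Suc (Suc m) div 2}. f b (Suc (Suc m) - 2*b)) = f 1 m + (\<Sum>b\<in>{1..m div 2}. f (Suc b) (m - 2*b))"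
proof -
  have "Suc (Suc m) div 2 = Suc (m div 2)" by simp
  then have "(\<Sum>b\<in>{1..Suc (Suc m) div 2}. f b (Suc (Suc m) - 2*b)) = (\<Sum>b\<in>{1..Suc (m div 2)}. f b (Suc (Suc m) - 2*b))"
    by simp
  also have "\<dots> = f 1 m + (\<Sum>b\<in>{Suc 1..Suc (m div 2)}. f b (Suc (Suc m) - 2*b))"
    by (subst sum.atLeast_Suc_atMost) auto
  also have "(\<Sum>b\<in>{Suc 1..Suc (m div 2)}. f b (Suc (Suc m) - 2*b)) = (\<Sum>b\<in>{1..m div 2}. f (Suc b) (m - 2*b))"
    by (subst sum.shift_bounds_cl_Suc_ivl) simp
  finally show ?thesis .
qed

definition SZ where "SZ m = (\<Sum>b\<in>{1..m div 2}. zc (m - 2*b))"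
definition SO where "SO m = (\<Sum>b\<in>{1..m div 2}. b * zc (m - 2*b) + zo (m - 2*b))"

lemma SZ_rec: "SZ (Suc (Suc m)) = zc m + SZ m"
  unfolding SZ_def using sum_shift2[of "\<lambda>b k. zc k" m] by simp

lemma SO_rec: "SO (Suc (Suc m)) = zc m + zo m + SZ m + SO m"
proof -
  have "SO (Suc (Suc m)) = zc m + zo m + (\<Sum>b\<in>{1..m div 2}. Suc b * zc (m - 2*b) + zo (m - 2*b))"
    unfolding SO_def using sum_shift2[of "\<lambda>b k. b * zc k + zo k" m] by simp
  also have "(\<Sum>b\<in>{1..m div 2}. Suc b * zc (m - 2*b) + zo (m - 2*b)) = SZ m + SO m"
    unfolding SZ_def SO_def by (simp add: sum.distrib)
  finally show ?thesis by simp
qed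

lemma zc0: "zc 0 = 1" by (simp add: zc_def Z_0)
lemma zo0: "zo 0 = 0" by (simp add: zo_def Z_0 ones_count_def)

lemma zc_Suc': "zc (Suc m) = zc m + SZ m" using zc_Suc SZ_def by simp
lemma zo_Suc': "zo (Suc m) = zo m + SO m" using zo_Suc SO_def by simp

lemma zc_fib: "zc (Suc n) = fib (Suc n) \<and> zc (Suc (Suc n)) = fib (Suc (Suc n))"
proof (induction n)
  case 0
  have "SZ 0 = 0" "SZ 1 = 0" by (simp_all add: SZ_def)
  then show ?case using zc_Suc'[of 0] zc_Suc'[of 1] zc0 by simp
next
  case (Suc n)
  have "zc (Suc (Suc (Suc n))) = zc (Suc (Suc n)) + zc (Suc n)"
    using zc_Suc'[of "Suc (Suc n)"] SZ_rec[of n] zc_Suc'[of n] by simp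
  then show ?case using Suc by simp
qed

definition P :: "nat \<Rightarrow> nat" where
  "P n = 2 * n * fib n + n * fib (Suc n) + 2 * fib n"

lemma P_rec: "P (Suc (Suc n)) = P (Suc n) + P n + 5 * fib (Suc (Suc n))"
  by (simp add: P_def algebra_simps)

lemma zo_rec: "zo (Suc (Suc (Suc m))) = zo (Suc (Suc m)) + zo (Suc m) + zc (Suc m)"
proof -
  have "zo (Suc (Suc (Suc m))) = zo (Suc (Suc m)) + SO (Suc (Suc m))" by (rule zo_Suc')
  also have "SO (Suc (Suc m)) = zc m + zo m + SZ m + SO m" by (rule SO_rec)
  finally show ?thesis using zo_Suc'[of m] zc_Suc'[of m] by simp
qed

lemma zo_P: "5 * zo (Suc (Suc n)) = P n \<and> 5 * zo (Suc (Suc (Suc n))) = P (Suc n)"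
proof (induction n)
  case 0
  have "SO 0 = 0" "SO 1 = 0" "SO 2 = 1" by (simp_all add: SO_def zc0 zo0)
  then have "zo 1 = 0" "zo 2 = 0" "zo 3 = 1" using zo_Suc'[of 0] zo_Suc'[of 1] zo_Suc'[of 2] zo0
    by (simp_all add: numeral_2_eq_2 numeral_3_eq_3)
  then show ?case by (simp add: P_def numeral_2_eq_2 numeral_3_eq_3)
next
  case (Suc n)
  have "zo (Suc (Suc (Suc (Suc n)))) = zo (Suc (Suc (Suc n))) + zo (Suc (Suc n)) + fib (Suc (Suc n))"
    using zo_rec[of "Suc n"] zc_fib[of "Suc n"] by simp
  then show ?case using Suc P_rec[of n] by simp
qed

lemma cW_fib: "cW n = fib (Suc (Suc n))"
proof (induction n)
  case 0 then show ?case by (simp add: cW_def W1_0)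
next
  case (Suc n) then show ?case using cW_Suc[of n] zc_fib[of n] by simp
qed

lemma sW_P: "5 * sW n + 5 = P n + 5 * fib (Suc n)"
proof (induction n)
  case 0 then show ?case by (simp add: sW_def W1_0 P_def ones_count_def)
next
  case (Suc n)
  have "5 * sW (Suc n) + 5 = 5 * sW n + 5 + 5 * cW n + 5 * zo (Suc n)"
    using sW_Suc[of n] by simp
  also have "\<dots> = P n + 5 * fib (Suc n) + 5 * fib (Suc (Suc n)) + 5 * zo (Suc n)"
    using Suc cW_fib[of n] by simp
  also have "\<dots> = P (Suc n) + 5 * fib (Suc (Suc n))"
  proof (cases n)
    case 0
    then show ?thesis using zo_Suc'[of 0] zo0 by (simp add: SO_def P_def)
  next
    case (Suc k)
    then show ?thesis using zo_P[of k] P_rec[of k] by simp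
  qed
  finally show ?case .
qed

lemma nc_Cons:
  "(\<forall>i. i + 1 < length (x # w) \<longrightarrow> \<not> ((x # w) ! i \<and> (x # w) ! (i + 1))) \<longleftrightarrow>
   (\<forall>i. i + 1 < length w \<longrightarrow> \<not> (w ! i \<and> w ! (i + 1))) \<and> (x \<longrightarrow> w = [] \<or> \<not> hd w)"
proof
  assume H: "\<forall>i. i + 1 < length (x # w) \<longrightarrow> \<not> ((x # w) ! i \<and> (x # w) ! (i + 1))"
  have "\<forall>i. i + 1 < length w \<longrightarrow> \<not> (w ! i \<and> w ! (i + 1))"
  proof (intro allI impI)
    fix i assume "i + 1 < length w"
    then show "\<not> (w ! i \<and> w ! (i + 1))" using H[rule_format, of "Suc i"] by simp
  qed
  moreover have "x \<longrightarrow> w = [] \<or> \<not> hd w"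
    using H[rule_format, of 0] by (cases w) auto
  ultimately show "(\<forall>i. i + 1 < length w \<longrightarrow> \<not> (w ! i \<and> w ! (i + 1))) \<and> (x \<longrightarrow> w = [] \<or> \<not> hd w)" by blast
next
  assume H: "(\<forall>i. i + 1 < length w \<longrightarrow> \<not> (w ! i \<and> w ! (i + 1))) \<and> (x \<longrightarrow> w = [] \<or> \<not> hd w)"
  show "\<forall>i. i + 1 < length (x # w) \<longrightarrow> \<not> ((x # w) ! i \<and> (x # w) ! (i + 1))"
  proof (intro allI impI)
    fix i assume i: "i + 1 < length (x # w)"
    show "\<not> ((x # w) ! i \<and> (x # w) ! (i + 1))"
    proof (cases i)
      case 0 then show ?thesis using H i by (cases w) auto
    next
      case (Suc j) then show ?thesis using H i by auto
    qed
  qed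
qed

lemma B11_0: "B11 0 = {[]}" by (auto simp: B11_def)

lemma B11_1: "B11 1 = {[False], [True]}"
  by (auto simp: B11_def length_Suc_conv)

lemma B11_SS: "B11 (Suc (Suc n)) = Cons False ` B11 (Suc n) \<union> (\<lambda>w. True # False # w) ` B11 n"
proof (intro equalityI subsetI)
  fix w assume "w \<in> B11 (Suc (Suc n))"
  then obtain x y v where w: "w = x # y # v" "length v = n" and nc: "w \<in> B11 (Suc (Suc n))"
    by (auto simp: B11_def length_Suc_conv)
  show "w \<in> Cons False ` B11 (Suc n) \<union> (\<lambda>w. True # False # w) ` B11 n"
  proof (cases x)
    case True
    then have "\<not> y" "y # v \<in> B11 (Suc n)" using nc w by (auto simp: B11_def nc_Cons simp del: One_nat_def)
    then have "v \<in> B11 n" using w by (auto simp: B11_def nc_Cons simp del: One_nat_def)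
    then show ?thesis using w True \<open>\<not> y\<close> by auto
  next
    case False
    then have "y # v \<in> B11 (Suc n)" using nc w by (auto simp: B11_def nc_Cons simp del: One_nat_def)
    then show ?thesis using w False by auto
  qed
next
  fix w assume "w \<in> Cons False ` B11 (Suc n) \<union> (\<lambda>w. True # False # w) ` B11 n"
  then show "w \<in> B11 (Suc (Suc n))"
  proof
    assume "w \<in> Cons False ` B11 (Suc n)"
    then obtain v where v: "w = False # v" "v \<in> B11 (Suc n)" by auto
    then show ?thesis unfolding B11_def using nc_Cons[of False v] by simp
  next
    assume "w \<in> (\<lambda>w. True # False # w) ` B11 n"
    then obtain v where v: "w = True # False # v" "v \<in> B11 n" by auto
    then show ?thesis unfolding B11_def using nc_Cons[of True "False # v"] nc_Cons[of False v] by simp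
  qed
qed

lemma B11_SS_disj: "Cons False ` B11 (Suc n) \<inter> (\<lambda>w. True # False # w) ` B11 n = {}"
  by auto

lemma finite_B11: "finite (B11 m)"
  by (rule finite_subset[OF _ finite_lists_length_eq[of "UNIV :: bool set" m]]) (auto simp: B11_def)

definition cB where "cB n = card (B11 n)"
definition sB where "sB n = sum ones_count (B11 n)"

lemma cB_SS: "cB (Suc (Suc n)) = cB (Suc n) + cB n"
proof -
  have "card (B11 (Suc (Suc n))) = card (Cons False ` B11 (Suc n)) + card ((\<lambda>w. True # False # w) ` B11 n)"
    unfolding B11_SS by (rule card_Un_disjoint) (use finite_B11 in auto)
  then show ?thesis unfolding cB_def by (simp add: card_image inj_on_def)
qed

lemma sB_SS: "sB (Suc (Suc n)) = sB (Suc n) + sB n + cB n"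
proof -
  have "sum ones_count (B11 (Suc (Suc n))) = sum ones_count (Cons False ` B11 (Suc n)) + sum ones_count ((\<lambda>w. True # False # w) ` B11 n)"
    unfolding B11_SS by (rule sum.union_disjoint) (use finite_B11 in auto)
  also have "sum ones_count (Cons False ` B11 (Suc n)) = sB (Suc n)"
    by (subst sum.reindex) (auto simp: ones_Cons sB_def)
  also have "sum ones_count ((\<lambda>w. True # False # w) ` B11 n) = (\<Sum>w\<in>B11 n. ones_count w + 1)"
    by (subst sum.reindex) (auto simp: ones_Cons inj_on_def)
  also have "\<dots> = sB n + cB n" by (simp only: sum.distrib sB_def cB_def card_eq_sum)
  finally show ?thesis unfolding sB_def by simp
qed

lemma cB_fib: "cB n = fib (Suc (Suc n)) \<and> cB (Suc n) = fib (Suc (Suc (Suc n)))"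
proof (induction n)
  case 0 then show ?case by (simp add: cB_def B11_0 B11_1[simplified])
next
  case (Suc n) then show ?case using cB_SS[of n] by simp
qed

lemma sB_P: "5 * sB n = P n \<and> 5 * sB (Suc n) = P (Suc n)"
proof (induction n)
  case 0 then show ?case by (simp add: sB_def B11_0 B11_1[simplified] P_def ones_count_def)
next
  case (Suc n) then show ?case using sB_SS[of n] P_rec[of n] cB_fib[of n] by simp
qed

lemma gr_facts: "golden_ratio > 1" "golden_ratio ^ 2 = golden_ratio + 1"
proof -
  have s: "sqrt 5 * sqrt 5 = (5::real)" by simp
  have "sqrt 5 > (1::real)" by simp
  then show "golden_ratio > 1" by (simp add: golden_ratio_def)
  show "golden_ratio ^ 2 = golden_ratio + 1"
    by (simp add: golden_ratio_def power2_eq_square field_simps s algebra_simps)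
qed

lemma fib_ratio:
  "(\<lambda>n. real (fib (n + k)) / real (fib (n + 2))) \<longlonglongrightarrow> golden_ratio ^ k / golden_ratio ^ 2"
proof -
  define \<phi> :: real where "\<phi> = (1 + sqrt 5) / 2"
  define \<psi> :: real where "\<psi> = (1 - sqrt 5) / 2"
  define q where "q = \<psi> / \<phi>"
  have gp: "golden_ratio = \<phi>" by (simp add: golden_ratio_def \<phi>_def)
  have p1: "\<phi> > 1" using gr_facts(1) gp by simp
  have s5: "sqrt 5 > (1::real)" by simp
  have s5': "sqrt 5 < (3::real)"
    by (rule real_less_lsqrt) auto
  have "\<bar>\<psi>\<bar> < \<phi>" using s5 s5' unfolding \<psi>_def \<phi>_def by (auto simp: abs_if divide_simps)
  then have nq: "norm q < 1" using p1 by (simp add: q_def abs_divide)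
  have q0: "(\<lambda>n. q ^ n) \<longlonglongrightarrow> 0" by (rule LIMSEQ_power_zero[OF nq])
  have eq: "real (fib (n + k)) / real (fib (n + 2)) = (\<phi> ^ k - \<psi> ^ k * q ^ n) / (\<phi> ^ 2 - \<psi> ^ 2 * q ^ n)" for n
  proof -
    have fpos: "real (fib (n + 2)) \<noteq> 0" using fib_neq_0_nat[of "n+2"] by (simp del: fib2 add: of_nat_eq_0_iff)
    have cf: "real (fib m) = (\<phi> ^ m - \<psi> ^ m) / sqrt 5" for m
      unfolding \<phi>_def \<psi>_def by (rule fib_closed_form)
    have pn: "\<phi> ^ n \<noteq> 0" using p1 by simp
    have d: "\<phi> ^ (n + 2) - \<psi> ^ (n + 2) \<noteq> 0" using fpos cf[of "n+2"] by auto
    have d2: "\<phi> ^ 2 - \<psi> ^ 2 * q ^ n = (\<phi> ^ (n + 2) - \<psi> ^ (n + 2)) / \<phi> ^ n"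
      using pn by (simp add: q_def power_divide power_add field_simps power2_eq_square)
    have n2: "\<phi> ^ k - \<psi> ^ k * q ^ n = (\<phi> ^ (n + k) - \<psi> ^ (n + k)) / \<phi> ^ n"
      using pn by (simp add: q_def power_divide power_add field_simps)
    show ?thesis unfolding d2 n2 cf using pn d s5 by (simp add: field_simps)
  qed
  have "(\<lambda>n. (\<phi> ^ k - \<psi> ^ k * q ^ n) / (\<phi> ^ 2 - \<psi> ^ 2 * q ^ n)) \<longlonglongrightarrow> (\<phi> ^ k - \<psi> ^ k * 0) / (\<phi> ^ 2 - \<psi> ^ 2 * 0)"
    using p1 by (intro tendsto_intros q0) auto
  then show ?thesis unfolding eq gp by simp
qed



lemma freq_eq:
  assumes "finite S" "\<And>w. w \<in> S \<Longrightarrow> length w = n"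
  shows "ones_frequency S = real (sum ones_count S) / (real n * real (card S))"
proof -
  have "(\<Sum>w\<in>S. length w) = (\<Sum>w\<in>S. n)" using assms(2) by (rule sum.cong[OF refl])
  then show ?thesis unfolding ones_frequency_def by (simp add: mult.commute)
qed

lemma L_eq: "(2 * (golden_ratio ^ 0 / golden_ratio ^ 2) + golden_ratio ^ 1 / golden_ratio ^ 2) / 5
   = (2 - golden_ratio) / (3 - golden_ratio)"
proof -
  have g1: "golden_ratio > 1" and g2: "golden_ratio ^ 2 = golden_ratio + 1" using gr_facts by auto
  have g3: "golden_ratio < 3"
  proof -
    have "sqrt 5 < (3::real)" by (rule real_less_lsqrt) auto
    then show ?thesis by (simp add: golden_ratio_def)
  qed
  have "(2 + golden_ratio) * (3 - golden_ratio) = 5 * golden_ratio ^ 2 * (2 - golden_ratio)"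
  proof -
    have "golden_ratio ^ 3 = 2 * golden_ratio + 1"
      using g2 by (simp add: power3_eq_cube power2_eq_square algebra_simps)
    then show ?thesis using g2 by (simp add: power2_eq_square power3_eq_cube algebra_simps)
  qed
  then show ?thesis using g1 g3 by (simp add: field_simps)
qed

lemma limA: "(\<lambda>n. real (P n) / (5 * (real n * real (fib (n + 2))))) \<longlonglongrightarrow> (2 - golden_ratio) / (3 - golden_ratio)"
proof -
  define r0 where "r0 n = real (fib (n + 0)) / real (fib (n + 2))" for n
  define r1 where "r1 n = real (fib (n + 1)) / real (fib (n + 2))" for n
  have R0: "r0 \<longlonglongrightarrow> golden_ratio ^ 0 / golden_ratio ^ 2" unfolding r0_def by (rule fib_ratio)
  have R1: "r1 \<longlonglongrightarrow> golden_ratio ^ 1 / golden_ratio ^ 2" unfolding r1_def by (rule fib_ratio)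
  have "(\<lambda>n. (2 * r0 n + r1 n) / 5 + 2 / 5 * r0 n * inverse (real n)) \<longlonglongrightarrow>
        (2 * (golden_ratio ^ 0 / golden_ratio ^ 2) + golden_ratio ^ 1 / golden_ratio ^ 2) / 5 + 2 / 5 * (golden_ratio ^ 0 / golden_ratio ^ 2) * 0"
    by (intro tendsto_intros R0 R1 lim_inverse_n) auto
  then have lim: "(\<lambda>n. (2 * r0 n + r1 n) / 5 + 2 / 5 * r0 n * inverse (real n)) \<longlonglongrightarrow> (2 - golden_ratio) / (3 - golden_ratio)"
    by (simp only: mult_zero_right add_0_right L_eq)
  have ev: "\<forall>\<^sub>F n in sequentially. (2 * r0 n + r1 n) / 5 + 2 / 5 * r0 n * inverse (real n) = real (P n) / (5 * (real n * real (fib (n + 2))))"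
    using eventually_gt_at_top[of "0::nat"]
  proof eventually_elim
    case (elim n)
    have fpos: "real (fib (n + 2)) \<noteq> 0" using fib_neq_0_nat[of "n+2"] by (simp del: fib2 add: of_nat_eq_0_iff)
    have PP: "real (P n) = 2 * real n * real (fib n) + real n * real (fib (n + 1)) + 2 * real (fib n)"
      by (simp add: P_def del: fib2)
    show ?case using elim fpos unfolding r0_def r1_def PP
      by (simp add: field_simps del: fib2)
  qed
  show ?thesis using Lim_transform_eventually[OF lim ev] .
qed

theorem corollary4:
  shows "((\<lambda>n. ones_frequency (W1 n)) \<longlonglongrightarrow> (2 - golden_ratio) / (3 - golden_ratio)) \<and>
         ((\<lambda>n. ones_frequency (B11 n)) \<longlonglongrightarrow> (2 - golden_ratio) / (3 - golden_ratio))"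
proof
  have fB: "ones_frequency (B11 n) = real (P n) / (5 * (real n * real (fib (n + 2))))" for n
  proof -
    have "ones_frequency (B11 n) = real (sB n) / (real n * real (cB n))"
      unfolding sB_def cB_def by (rule freq_eq[OF finite_B11]) (auto simp: B11_def)
    moreover have "real (sB n) = real (P n) / 5" using sB_P[of n] by linarith
    moreover have "cB n = fib (n + 2)" using cB_fib[of n] by simp
    ultimately show ?thesis by simp
  qed
  show "(\<lambda>n. ones_frequency (B11 n)) \<longlonglongrightarrow> (2 - golden_ratio) / (3 - golden_ratio)"
    unfolding fB by (rule limA)
  define r1 where "r1 n = real (fib (n + 1)) / real (fib (n + 2))" for n
  define e where "e n = inverse (real (fib (n + 2))) * inverse (real n)" for n
  have fW: "ones_frequency (W1 n) = real (P n) / (5 * (real n * real (fib (n + 2)))) + r1 n * inverse (real n) - e n" for n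
  proof -
    have "ones_frequency (W1 n) = real (sW n) / (real n * real (cW n))"
      unfolding sW_def cW_def by (rule freq_eq[OF finite_W1]) (auto simp: W1_def)
    moreover have "real (sW n) = (real (P n) + 5 * real (fib (n + 1)) - 5) / 5"
      using sW_P[of n] by (simp del: fib2)
    moreover have "cW n = fib (n + 2)" using cW_fib[of n] by simp
    ultimately have A: "ones_frequency (W1 n) = (real (P n) + 5 * real (fib (n + 1)) - 5) / 5 / (real n * real (fib (n + 2)))"
      by simp
    have fpos: "real (fib (n + 2)) \<noteq> 0" using fib_neq_0_nat[of "n+2"] by (simp del: fib2 add: of_nat_eq_0_iff)
    show ?thesis unfolding A r1_def e_def using fpos
      by (cases "n = 0") (simp_all add: field_simps del: fib2)
  qed
  have R1: "r1 \<longlonglongrightarrow> golden_ratio ^ 1 / golden_ratio ^ 2" unfolding r1_def by (rule fib_ratio)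
  have E: "e \<longlonglongrightarrow> 0"
  proof (rule tendsto_sandwich[of "\<lambda>n. 0" e sequentially "\<lambda>n. inverse (real n)"])
    show "\<forall>\<^sub>F n in sequentially. 0 \<le> e n" by (simp add: e_def)
    show "\<forall>\<^sub>F n in sequentially. e n \<le> inverse (real n)"
    proof (rule always_eventually, rule allI)
      fix n
      have "real (fib (n + 2)) \<ge> 1" using fib_neq_0_nat[of "n+2"] by (simp del: fib2)
      then have "inverse (real (fib (n + 2))) \<le> 1" by (simp only: inverse_le_1_iff) simp
      then show "e n \<le> inverse (real n)" unfolding e_def
        by (simp add: mult_left_le_one_le)
    qed
  qed (auto intro: lim_inverse_n)
  have "(\<lambda>n. real (P n) / (5 * (real n * real (fib (n + 2)))) + r1 n * inverse (real n) - e n)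
        \<longlonglongrightarrow> (2 - golden_ratio) / (3 - golden_ratio) + golden_ratio ^ 1 / golden_ratio ^ 2 * 0 - 0"
    by (intro tendsto_intros limA R1 lim_inverse_n E)
  then show "(\<lambda>n. ones_frequency (W1 n)) \<longlonglongrightarrow> (2 - golden_ratio) / (3 - golden_ratio)"
    unfolding fW by simp
qed

end
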